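(* Let $P,Q$ be nonzero coprime integers with $\Delta:=P^2-4Q\neq0$, such that $\alpha/\beta$ is not a root of unity, where $\alpha,\beta$ are the roots of $x^2-Px+Q$. Let $(U_n)$ be the Lucas sequence $U_n=(\alpha^n-\beta^n)/(\alpha-\beta)$. Then for all positive integers $n,k$ with $n\ge k$, \[\mathrm{lcm}(U_n,U_{n-1},\dots,U_{n-k+1})=\mathrm{lcm}\left\{U_m\binom{n}{m}_{\boldsymbol U}:\ 1\le m\le k\right\}.\]
   Context: $U_0=0$, $U_1=1$, $U_{n+2}=PU_{n+1}-QU_n$. For $j\ge0$, $[j]_{\boldsymbol U}!:=U_1\cdots U_j$ ($[0]_{\boldsymbol U}!=1$), and for $n\ge k\ge 1$, $\binom{n}{k}_{\boldsymbol U}:=\frac{U_nU_{n-1}\cdots U_{n-k+1}}{U_1U_2\cdots U_k}=\frac{[n]_{\boldsymbol U}!}{[k]_{\boldsymbol U}![n-k]_{\boldsymbol U}!}$ (these are integers when $\gcd(P,Q)=1$). *)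

theory Defs
  imports "HOL-Analysis.Analysis"
begin

fun lucasU :: "int \<Rightarrow> int \<Rightarrow> nat \<Rightarrow> int" where
  "lucasU P Q 0 = 0"
| "lucasU P Q (Suc 0) = 1"
| "lucasU P Q (Suc (Suc n)) = P * lucasU P Q (Suc n) - Q * lucasU P Q n"

definition lucas_fact :: "int \<Rightarrow> int \<Rightarrow> nat \<Rightarrow> int" where
  "lucas_fact P Q j = (\<Prod>i=1..j. lucasU P Q i)"

text \<open>U-binomial coefficient (U_n ... U_(n-k+1)) / (U_1 ... U_k); an integer when gcd(P,Q)=1,
  so the exact quotient is taken with integer division.\<close>
definition lucas_binom :: "int \<Rightarrow> int \<Rightarrow> nat \<Rightarrow> nat \<Rightarrow> int" where
  "lucas_binom P Q n k = (\<Prod>i=n-k+1..n. lucasU P Q i) div lucas_fact P Q k"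

definition lucas_alpha :: "int \<Rightarrow> int \<Rightarrow> complex" where
  "lucas_alpha P Q = (of_int P + csqrt (of_int (P^2 - 4*Q))) / 2"
definition lucas_beta :: "int \<Rightarrow> int \<Rightarrow> complex" where
  "lucas_beta P Q = (of_int P - csqrt (of_int (P^2 - 4*Q))) / 2"

definition root_of_unity :: "complex \<Rightarrow> bool" where
  "root_of_unity z \<longleftrightarrow> (\<exists>m::nat. m > 0 \<and> z ^ m = 1)"

end

theory Submission
  imports Defs "HOL-Computational_Algebra.Primes"
begin


lemma lucas_add:
  "lucasU P Q (x + y + 1) = lucasU P Q (x+1) * lucasU P Q (y+1) - Q * lucasU P Q x * lucasU P Q y"
proof (induction x rule: less_induct)
  case (less x)
  consider "x = 0" | "x = 1" | z where "x = Suc (Suc z)"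
    by (metis One_nat_def not0_implies_Suc)
  then show ?case
  proof cases
    case 1 then show ?thesis by simp
  next
    case 2 then show ?thesis by (simp add: numeral_2_eq_2)
  next
    case 3
    let ?U = "lucasU P Q"
    have i1: "?U (z + y + 1) = ?U (z+1) * ?U (y+1) - Q * ?U z * ?U y"
      using 3 by (intro less.IH) simp
    have i2: "?U (Suc z + y + 1) = ?U (Suc z+1) * ?U (y+1) - Q * ?U (Suc z) * ?U y"
      using 3 by (intro less.IH) simp
    have e: "?U (x + y + 1) = P * ?U (Suc z + y + 1) - Q * ?U (z + y + 1)"
      using 3 by simp
    have e2: "?U (x+1) = P * ?U (Suc z + 1) - Q * ?U (z+1)"
      using 3 by simp
    have e3: "?U (Suc z + 1) = P * ?U (z + 1) - Q * ?U z"
      by simp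
    have ex: "?U x = ?U (Suc z + 1)" using 3 by simp
    have "?U (x + y + 1) = P * (?U (Suc z+1) * ?U (y+1) - Q * ?U (Suc z) * ?U y) - Q * (?U (z+1) * ?U (y+1) - Q * ?U z * ?U y)"
      unfolding e i1 i2 ..
    also have "\<dots> = ?U (x+1) * ?U (y+1) - Q * ?U x * ?U y"
      unfolding e2 ex e3 by (simp del: lucasU.simps add: algebra_simps)
    finally show ?thesis .
  qed
qed

lemma cop_shift: "coprime (n + k*m) m \<longleftrightarrow> coprime (n::int) m"
  by (metis coprime_iff_gcd_eq_1 gcd_add_mult add.commute gcd.commute)

lemma lucas_fact_0[simp]: "lucas_fact P Q 0 = 1"
  by (simp add: lucas_fact_def)

lemma lucas_fact_Suc: "lucas_fact P Q (Suc j) = lucas_fact P Q j * lucasU P Q (Suc j)"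
  by (simp add: lucas_fact_def prod.nat_ivl_Suc' mult.commute)

fun lbc :: "int \<Rightarrow> int \<Rightarrow> nat \<Rightarrow> nat \<Rightarrow> int" where
  "lbc P Q 0 b = 1"
| "lbc P Q (Suc a) 0 = 1"
| "lbc P Q (Suc a) (Suc b) = lucasU P Q (a+2) * lbc P Q (Suc a) b - Q * lucasU P Q b * lbc P Q a (Suc b)"

lemma lbc_prop: "lucas_fact P Q a * lucas_fact P Q b * lbc P Q a b = lucas_fact P Q (a+b)"
proof (induction P Q a b rule: lbc.induct)
  case (1 P Q b) then show ?case by simp
next
  case (2 P Q a) then show ?case by simp
next
  case (3 P Q a b)
  let ?F = "lucas_fact P Q" and ?U = "lucasU P Q"
  have ad: "?U (a+b+2) = ?U (a+2) * ?U (b+1) - Q * ?U (a+1) * ?U b"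
    using lucas_add[of P Q "a+1" b] by (simp add: add.commute add.left_commute)
  have f1: "?F (Suc a) = ?F a * ?U (a+1)" by (simp add: lucas_fact_Suc)
  have f2: "?F (Suc b) = ?F b * ?U (b+1)" by (simp add: lucas_fact_Suc)
  have f3: "?F (Suc a + Suc b) = ?F (a+b+1) * ?U (a+b+2)"
    using lucas_fact_Suc[of P Q "a+b+1"] by simp
  have i1: "?F (Suc a) * ?F b * lbc P Q (Suc a) b = ?F (a+b+1)" using 3(1) by simp
  have i2: "?F a * ?F (Suc b) * lbc P Q a (Suc b) = ?F (a+b+1)" using 3(2) by simp
  have "?F (Suc a) * ?F (Suc b) * lbc P Q (Suc a) (Suc b)
     = ?U (a+2) * ?U (b+1) * (?F (Suc a) * ?F b * lbc P Q (Suc a) b)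
       - Q * ?U b * ?U (a+1) * (?F a * ?F (Suc b) * lbc P Q a (Suc b))"
    by (simp add: f1 f2 algebra_simps)
  also have "\<dots> = ?F (a+b+1) * ?U (a+b+2)" unfolding i1 i2 ad by (simp add: algebra_simps)
  finally show ?case using f3 by simp
qed

lemma prod_split: "(\<Prod>i=j+1..j+c. lucasU P Q i) * lucas_fact P Q j = lucas_fact P Q (j+c)"
proof (induction c)
  case 0 then show ?case by simp
next
  case (Suc c)
  have "(\<Prod>i=j+1..j+Suc c. lucasU P Q i) = lucasU P Q (Suc (j+c)) * (\<Prod>i=j+1..j+c. lucasU P Q i)"
    by (simp add: prod.nat_ivl_Suc')
  then show ?case using Suc by (simp add: lucas_fact_Suc algebra_simps)
qed

lemma coprime_UQ: "coprime P Q \<Longrightarrow> coprime (lucasU P Q (Suc n)) Q"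
proof (induction n rule: less_induct)
  case (less n)
  show ?case
  proof (cases n)
    case 0 then show ?thesis by simp
  next
    case (Suc m)
    have "coprime (lucasU P Q (Suc m)) Q" using less Suc by simp
    then have "coprime (P * lucasU P Q (Suc m)) Q" using less.prems by simp
    then have "coprime (P * lucasU P Q (Suc m) + (- lucasU P Q m) * Q) Q"
      using cop_shift by blast
    then show ?thesis using Suc by (simp add: mult.commute)
  qed
qed

lemma coprime_consec: "coprime P Q \<Longrightarrow> coprime (lucasU P Q (Suc n)) (lucasU P Q n)"
proof (induction n)
  case 0 then show ?case by simp
next
  case (Suc n)
  have a: "coprime (lucasU P Q (Suc n)) Q" using coprime_UQ Suc.prems by blast
  have "coprime (Q * lucasU P Q n) (lucasU P Q (Suc n))"
    using a Suc by (simp add: coprime_commute)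
  then have "coprime (- Q * lucasU P Q n) (lucasU P Q (Suc n))" by simp
  then have "coprime (- Q * lucasU P Q n + P * lucasU P Q (Suc n)) (lucasU P Q (Suc n))"
    using cop_shift by blast
  then show ?case by (simp add: algebra_simps)
qed



lemma dvd_add_idx:
  assumes "x dvd lucasU P Q a" "x dvd lucasU P Q b"
  shows "x dvd lucasU P Q (a+b)"
proof (cases b)
  case 0 then show ?thesis using assms(1) by simp
next
  case (Suc c)
  have ab: "a + b = a + c + 1" using Suc by simp
  have e: "lucasU P Q (a+b) = lucasU P Q (a+1) * lucasU P Q b - Q * lucasU P Q a * lucasU P Q c"
    unfolding ab using lucas_add[of P Q a c] Suc by simp
  have "x dvd lucasU P Q (a+1) * lucasU P Q b" using assms(2) by (rule dvd_mult)
  moreover have "x dvd Q * lucasU P Q a * lucasU P Q c" using assms(1)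
    by (intro dvd_mult2 dvd_mult)
  ultimately show ?thesis unfolding e by (rule dvd_diff)
qed

lemma dvd_sub_idx:
  assumes "coprime P Q" "1 \<le> b" "x dvd lucasU P Q b" "x dvd lucasU P Q (a+b)"
  shows "x dvd lucasU P Q a"
proof -
  obtain c where c: "b = Suc c" using assms(2) Suc_le_D[of 0 b] by auto
  have ab: "a + b = a + c + 1" using c by simp
  have e: "lucasU P Q (a+b) = lucasU P Q (a+1) * lucasU P Q b - Q * lucasU P Q a * lucasU P Q c"
    unfolding ab using lucas_add[of P Q a c] c by simp
  have e2: "Q * lucasU P Q a * lucasU P Q c = lucasU P Q (a+1) * lucasU P Q b - lucasU P Q (a+b)"
    using e by simp
  have "x dvd lucasU P Q (a+1) * lucasU P Q b" using assms(3) by (rule dvd_mult)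
  then have d: "x dvd Q * lucasU P Q a * lucasU P Q c"
    unfolding e2 using assms(4) by (rule dvd_diff)
  have cb: "coprime (lucasU P Q b) Q" using coprime_UQ[OF assms(1), of c] c by simp
  have c1: "coprime x Q" by (rule coprime_divisors[OF assms(3) dvd_refl cb])
  have cb2: "coprime (lucasU P Q b) (lucasU P Q c)" using coprime_consec[OF assms(1), of c] c by simp
  have c2: "coprime x (lucasU P Q c)" by (rule coprime_divisors[OF assms(3) dvd_refl cb2])
  have c3: "coprime x (Q * lucasU P Q c)" using c1 c2 by simp
  have d': "x dvd (Q * lucasU P Q c) * lucasU P Q a" using d by (simp only: ac_simps)
  show ?thesis using d' c3 coprime_dvd_mult_right_iff by blast
qed

lemma dvd_gcd_idx:
  assumes "coprime P Q"
  shows "x dvd lucasU P Q a \<Longrightarrow> x dvd lucasU P Q b \<Longrightarrow> x dvd lucasU P Q (gcd a b)"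
proof (induction "a+b" arbitrary: a b rule: less_induct)
  case less
  show ?case
  proof (cases "a = 0 \<or> b = 0")
    case True then show ?thesis
    proof
      assume "a = 0" then show ?thesis using less.prems(2) by simp
    next
      assume "b = 0" then show ?thesis using less.prems(1) by simp
    qed
  next
    case False
    show ?thesis
    proof (cases "a \<le> b")
      case True
      have ba: "b - a + a = b" using True by simp
      have "x dvd lucasU P Q (b - a)"
        using dvd_sub_idx[OF assms, of a x "b-a"] less.prems False unfolding ba by simp
      moreover have "gcd a (b-a) = gcd a b"
      proof -
        have "gcd (b-a) a = gcd b a" using gcd_diff1_nat[OF True] .
        then show ?thesis by (simp only: gcd.commute)
      qed
      moreover have "a + (b - a) < a + b" using False True by simp
      ultimately show ?thesis using less.hyps[of a "b-a"] less.prems(1) by simp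
    next
      case f2: False
      have ab: "a - b + b = a" using f2 by simp
      have "x dvd lucasU P Q (a - b)"
        using dvd_sub_idx[OF assms, of b x "a-b"] less.prems False unfolding ab by simp
      moreover have "gcd (a-b) b = gcd a b" using f2
        by (intro gcd_diff1_nat) simp
      moreover have "(a - b) + b < a + b" using False f2 by simp
      ultimately show ?thesis using less.hyps[of "a-b" b] less.prems(2) by simp
    qed
  qed
qed

lemma dvd_mult_idx: "x dvd lucasU P Q a \<Longrightarrow> x dvd lucasU P Q (a*j)"
proof (induction j)
  case 0 then show ?case by simp
next
  case (Suc j)
  have "x dvd lucasU P Q (a*j + a)" using dvd_add_idx[OF Suc.IH[OF Suc.prems] Suc.prems] .
  then show ?case by (simp add: add.commute)
qed


lemma quad_root:
  fixes x s p q :: complex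
  assumes "s^2 = p^2 - 4*q" "2*x = p + s"
  shows "x^2 = p*x - q"
proof -
  have "4 * (x^2 - p*x + q) = (2*x - p)^2 - (p^2 - 4*q)" by (simp add: power2_eq_square algebra_simps)
  also have "\<dots> = (2*x-p)^2 - s^2" using assms(1) by simp
  also have "\<dots> = 0" using assms(2) by (simp add: algebra_simps)
  finally have "4 * (x^2 - p*x + q) = 0" .
  then have "x^2 - p*x + q = 0" by (simp only: mult_eq_0_iff) simp
  then show ?thesis by (simp add: algebra_simps eq_diff_eq)
qed

lemma prod_roots:
  fixes x y s p q :: complex
  assumes "s^2 = p^2 - 4*q" "2*x = p + s" "2*y = p - s"
  shows "x*y = q"
proof -
  have "4*(x*y) = (2*x)*(2*y)" by simp
  also have "\<dots> = (p+s)*(p-s)" using assms by simp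
  also have "\<dots> = p^2 - s^2" by (simp add: power2_eq_square algebra_simps)
  also have "\<dots> = 4*q" using assms(1) by simp
  finally have "4*(x*y) = 4*q" .
  then show ?thesis by simp
qed

lemma roots_facts:
  "lucas_alpha P Q ^ 2 = of_int P * lucas_alpha P Q - of_int Q"
  "lucas_beta P Q ^ 2 = of_int P * lucas_beta P Q - of_int Q"
  "lucas_alpha P Q * lucas_beta P Q = of_int Q"
proof -
  define s where "s = csqrt (of_int (P^2 - 4*Q))"
  have s2: "s^2 = of_int P ^ 2 - 4 * of_int Q" unfolding s_def by simp
  have a: "2 * lucas_alpha P Q = of_int P + s" unfolding lucas_alpha_def s_def by simp
  have b: "2 * lucas_beta P Q = of_int P + (- s)" unfolding lucas_beta_def s_def by simp
  have s2': "(-s)^2 = of_int P ^ 2 - 4 * of_int Q" using s2 by simp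
  show "lucas_alpha P Q ^ 2 = of_int P * lucas_alpha P Q - of_int Q" using quad_root[OF s2 a] .
  show "lucas_beta P Q ^ 2 = of_int P * lucas_beta P Q - of_int Q" using quad_root[OF s2' b] .
  have b': "2 * lucas_beta P Q = of_int P - s" using b by simp
  show "lucas_alpha P Q * lucas_beta P Q = of_int Q" using prod_roots[OF s2 a b'] .
qed

lemma binet:
  "of_int (lucasU P Q n) * (lucas_alpha P Q - lucas_beta P Q) = lucas_alpha P Q ^ n - lucas_beta P Q ^ n"
proof (induction P Q n rule: lucasU.induct)
  case (1 P Q) then show ?case by simp
next
  case (2 P Q) then show ?case by simp
next
  case (3 P Q n)
  have qa: "lucas_alpha P Q ^ 2 = of_int P * lucas_alpha P Q - of_int Q" by (rule roots_facts(1))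
  have qb: "lucas_beta P Q ^ 2 = of_int P * lucas_beta P Q - of_int Q" by (rule roots_facts(2))
  have pa: "lucas_alpha P Q ^ Suc (Suc n) = of_int P * lucas_alpha P Q ^ Suc n - of_int Q * lucas_alpha P Q ^ n"
  proof -
    have "lucas_alpha P Q ^ Suc (Suc n) = lucas_alpha P Q ^ n * lucas_alpha P Q ^ 2"
      by (simp add: power2_eq_square algebra_simps)
    also have "\<dots> = lucas_alpha P Q ^ n * (of_int P * lucas_alpha P Q - of_int Q)" by (simp only: qa)
    finally show ?thesis by (simp add: algebra_simps)
  qed
  have pb: "lucas_beta P Q ^ Suc (Suc n) = of_int P * lucas_beta P Q ^ Suc n - of_int Q * lucas_beta P Q ^ n"
  proof -
    have "lucas_beta P Q ^ Suc (Suc n) = lucas_beta P Q ^ n * lucas_beta P Q ^ 2"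
      by (simp add: power2_eq_square algebra_simps)
    also have "\<dots> = lucas_beta P Q ^ n * (of_int P * lucas_beta P Q - of_int Q)" by (simp only: qb)
    finally show ?thesis by (simp add: algebra_simps)
  qed
  let ?d = "lucas_alpha P Q - lucas_beta P Q"
  have "of_int (lucasU P Q (Suc (Suc n))) * ?d = of_int P * (of_int (lucasU P Q (Suc n)) * ?d) - of_int Q * (of_int (lucasU P Q n) * ?d)"
    by (simp add: algebra_simps)
  also have "\<dots> = of_int P * (lucas_alpha P Q ^ Suc n - lucas_beta P Q ^ Suc n) - of_int Q * (lucas_alpha P Q ^ n - lucas_beta P Q ^ n)"
    by (simp only: 3)
  also have "\<dots> = lucas_alpha P Q ^ Suc (Suc n) - lucas_beta P Q ^ Suc (Suc n)"
    unfolding pa pb by (simp add: algebra_simps)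
  finally show ?case .
qed

lemma U_nonzero:
  assumes "Q \<noteq> 0" "P^2 - 4*Q \<noteq> 0" "\<not> root_of_unity (lucas_alpha P Q / lucas_beta P Q)" "1 \<le> n"
  shows "lucasU P Q n \<noteq> 0"
proof
  assume h: "lucasU P Q n = 0"
  have "lucas_alpha P Q * lucas_beta P Q = of_int Q" by (rule roots_facts(3))
  then have bz: "lucas_beta P Q \<noteq> 0" using assms(1) by auto
  have "lucas_alpha P Q ^ n = lucas_beta P Q ^ n" using binet[of P Q n] h by simp
  then have "(lucas_alpha P Q / lucas_beta P Q) ^ n = 1" using bz by (simp add: power_divide)
  moreover have "n > 0" using assms(4) by simp
  ultimately show False using assms(3) unfolding root_of_unity_def by blast
qed


lemma count_mult:
  assumes "(d::nat) > 0"
  shows "card {i\<in>{a+1..a+c}. d dvd i} = (a+c) div d - a div d"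
proof (induction c)
  case 0 then show ?case by simp
next
  case (Suc c)
  have s: "{i\<in>{a+1..a+Suc c}. d dvd i} = (if d dvd Suc (a+c) then insert (Suc (a+c)) {i\<in>{a+1..a+c}. d dvd i} else {i\<in>{a+1..a+c}. d dvd i})"
    by (auto simp: le_Suc_eq)
  have m: "a div d \<le> (a+c) div d" by (simp add: div_le_mono)
  show ?case
  proof (cases "d dvd Suc (a+c)")
    case True
    then have "Suc (a+c) div d = Suc ((a+c) div d)" by (simp add: div_Suc dvd_eq_mod_eq_0)
    then show ?thesis using s True Suc m by simp
  next
    case False
    then have "Suc (a+c) div d = (a+c) div d" by (simp add: div_Suc dvd_eq_mod_eq_0)
    then show ?thesis using s False Suc by simp
  qed
qed

lemma div_arith:
  assumes "(d::nat) > 0"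
  shows "(if d dvd m then 1 else 0) + ((x+m) div d - x div d) \<le> 1 + m div d"
proof -
  have e: "(x+m) div d = x div d + m div d + (x mod d + m mod d) div d"
    by (rule div_add1_eq)
  have "x mod d + m mod d < 2 * d" using assms mod_less_divisor[of d x] mod_less_divisor[of d m] by linarith
  then have l: "(x mod d + m mod d) div d \<le> 1"
    using assms by (metis Suc_1 div_less_iff_less_mult less_Suc_eq_le mult.commute)
  show ?thesis
  proof (cases "d dvd m")
    case True
    then have "m mod d = 0" by simp
    then have "(x mod d + m mod d) div d = 0" by simp
    then show ?thesis using e True by simp
  next
    case False
    then show ?thesis using e l by simp
  qed
qed

lemma mult_as_card:
  fixes p x :: int
  assumes "multiplicity p x \<le> B" "x \<noteq> 0" "prime p"
  shows "multiplicity p x = card {t\<in>{1..B}. p ^ t dvd x}"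
proof -
  have "{t\<in>{1..B}. p ^ t dvd x} = {1..multiplicity p x}"
    using assms power_dvd_iff_le_multiplicity[of x p] by (auto simp: not_prime_unit)
  then show ?thesis by simp
qed

lemma card_as_sum: "finite S \<Longrightarrow> card {t\<in>S. Pr t} = (\<Sum>t\<in>S. if Pr t then 1 else (0::nat))"
  by (simp add: sum.inter_filter[symmetric])

lemma layer:
  fixes f :: "nat \<Rightarrow> int" and p A :: int
  assumes nz: "\<And>i. i \<ge> 1 \<Longrightarrow> f i \<noteq> 0"
    and gcdp: "\<And>x a b. x dvd f a \<Longrightarrow> x dvd f b \<Longrightarrow> x dvd f (gcd a b)"
    and multp: "\<And>x a j. x dvd f a \<Longrightarrow> x dvd f (a*j)"
    and m: "1 \<le> m" "m \<le> n" and p: "prime p"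
    and A: "A * (\<Prod>i=1..m. f i) = f m * (\<Prod>i=n-m+1..n. f i)"
  shows "\<exists>i\<in>{n-m+1..n}. multiplicity p A \<le> multiplicity p (f i)"
proof -
  define I where "I = {n-m+1..n}"
  define v where "v i = multiplicity p (f i)" for i
  have If: "finite I" and Ine: "I \<noteq> {}" using m unfolding I_def by auto
  obtain i0 where i0: "i0 \<in> I" "v i0 = Max (v ` I)" using Max_in[of "v ` I"] If Ine by (metis finite_imageI image_is_empty imageE)
  have i0max: "v i \<le> v i0" if "i \<in> I" for i using i0 that If by simp
  have I1: "i \<ge> 1" if "i \<in> I" for i using that unfolding I_def by auto
  have Isub: "I \<subseteq> {1..n}" unfolding I_def using m by auto
  have pz1: "(\<Prod>i=1..m. f i) \<noteq> 0" using nz by (simp add: prod_zero_iff)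
  have pz2: "(\<Prod>i\<in>I. f i) \<noteq> 0" using nz I1 If by (simp add: prod_zero_iff)
  have fm: "f m \<noteq> 0" using nz m by simp
  have Az: "A \<noteq> 0" using A pz2 fm unfolding I_def by auto
  have pe: "prime_elem p" using p by (rule prime_imp_prime_elem)
  have meq: "multiplicity p A + (\<Sum>i=1..m. v i) = v m + (\<Sum>i\<in>I. v i)"
  proof -
    have z1: "0 \<notin> f ` {1..m}" using nz by auto
    have pm: "multiplicity p (\<Prod>i=1..m. f i) = (\<Sum>i=1..m. v i)"
      unfolding v_def by (rule prime_elem_multiplicity_prod_distrib[OF pe z1]) simp
    have h1: "multiplicity p (A * (\<Prod>i=1..m. f i)) = multiplicity p A + (\<Sum>i=1..m. v i)"
      using prime_elem_multiplicity_mult_distrib[OF pe Az pz1] pm by simp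
    have z2: "0 \<notin> f ` I" using nz I1 by force
    have pm2: "multiplicity p (\<Prod>i\<in>I. f i) = (\<Sum>i\<in>I. v i)"
      unfolding v_def by (rule prime_elem_multiplicity_prod_distrib[OF pe z2 If])
    have h2: "multiplicity p (f m * (\<Prod>i\<in>I. f i)) = v m + (\<Sum>i\<in>I. v i)"
      using prime_elem_multiplicity_mult_distrib[OF pe fm pz2] pm2 unfolding v_def by simp
    show ?thesis using h1 h2 A unfolding I_def by simp
  qed
  define B where "B = (\<Sum>i=1..n. v i)"
  have vB: "v i \<le> B" if "i \<in> {1..n}" for i
    unfolding B_def using that by (intro member_le_sum) auto
  define ind where "ind t i = (if p ^ t dvd f i then 1 else (0::nat))" for t i
  have vsum: "v i = (\<Sum>t\<in>{1..B}. ind t i)" if "i \<in> {1..n}" for i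
    using mult_as_card[of p "f i" B] vB[OF that] nz[of i] that p card_as_sum[of "{1..B}"]
    unfolding v_def ind_def by simp
  have ssum: "(\<Sum>i\<in>J. v i) = (\<Sum>t\<in>{1..B}. card {i\<in>J. p ^ t dvd f i})" if "J \<subseteq> {1..n}" for J
  proof -
    have fJ: "finite J" using that finite_subset by blast
    have "(\<Sum>i\<in>J. v i) = (\<Sum>i\<in>J. \<Sum>t\<in>{1..B}. ind t i)"
      using that vsum by (intro sum.cong) auto
    also have "\<dots> = (\<Sum>t\<in>{1..B}. \<Sum>i\<in>J. ind t i)" by (rule sum.swap)
    also have "\<dots> = (\<Sum>t\<in>{1..B}. card {i\<in>J. p ^ t dvd f i})"
      using card_as_sum[OF fJ] unfolding ind_def by simp
    finally show ?thesis .
  qed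
  have pert: "ind t m + card {i\<in>I. p ^ t dvd f i} \<le> ind t i0 + card {i\<in>{1..m}. p ^ t dvd f i}" for t
  proof (cases "\<exists>i\<in>I. p ^ t dvd f i")
    case False
    then have "{i\<in>I. p ^ t dvd f i} = {}" by auto
    then have "card {i\<in>I. p ^ t dvd f i} = 0" by (simp only: card.empty)
    moreover have "ind t m \<le> card {i\<in>{1..m}. p ^ t dvd f i}"
    proof (cases "p ^ t dvd f m")
      case True
      have "{m} \<subseteq> {i\<in>{1..m}. p ^ t dvd f i}" using True m(1) by simp
      then have "card {m} \<le> card {i\<in>{1..m}. p ^ t dvd f i}" by (intro card_mono) auto
      then have "card {i\<in>{1..m}. p ^ t dvd f i} \<ge> 1" by simp
      then show ?thesis unfolding ind_def by simp
    qed (simp add: ind_def)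
    ultimately show ?thesis by simp
  next
    case True
    then obtain i1 where i1: "i1 \<in> I" "p ^ t dvd f i1" by blast
    have pnu: "\<not> is_unit p" using p not_prime_unit by blast
    have "t \<le> v i1" using i1(2) power_dvd_iff_le_multiplicity[OF nz[OF I1[OF i1(1)]] pnu] unfolding v_def by simp
    then have "t \<le> v i0" using i0max[OF i1(1)] by simp
    then have g0: "ind t i0 = 1" unfolding ind_def v_def by (simp add: multiplicity_dvd')
    define d where "d = (LEAST i. 1 \<le> i \<and> p ^ t dvd f i)"
    have ex: "1 \<le> i1 \<and> p ^ t dvd f i1" using i1 I1 by simp
    have d1: "1 \<le> d" "p ^ t dvd f d" using LeastI[of "\<lambda>i. 1 \<le> i \<and> p ^ t dvd f i", OF ex]
      unfolding d_def by auto
    have chr: "p ^ t dvd f i \<longleftrightarrow> d dvd i" if "i \<ge> 1" for i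
    proof
      assume h: "p ^ t dvd f i"
      have g: "p ^ t dvd f (gcd i d)" using gcdp[OF h d1(2)] .
      have gp: "gcd i d \<ge> 1" using that by (simp add: Suc_le_eq)
      have "(LEAST i. 1 \<le> i \<and> p ^ t dvd f i) \<le> gcd i d" by (rule Least_le) (use g gp in simp)
      then have "d \<le> gcd i d" unfolding d_def .
      moreover have "gcd i d \<le> d" using d1 by (intro gcd_le2_nat) simp
      ultimately have "gcd i d = d" by simp
      then show "d dvd i" by (metis gcd_dvd1)
    next
      assume "d dvd i"
      then obtain j where "i = d * j" by blast
      then show "p ^ t dvd f i" using multp[OF d1(2)] by simp
    qed
    have dpos: "d > 0" using d1 by simp
    have chr': "{i\<in>J. p ^ t dvd f i} = {i\<in>J. d dvd i}" if "\<forall>i\<in>J. 1 \<le> i" for J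
      using chr that by blast
    have c1: "card {i\<in>I. p ^ t dvd f i} = n div d - (n-m) div d"
    proof -
      have "I = {(n-m)+1..(n-m)+m}" unfolding I_def using m by simp
      moreover have "{i\<in>I. p ^ t dvd f i} = {i\<in>I. d dvd i}" using chr' I1 by blast
      ultimately have "{i\<in>I. p ^ t dvd f i} = {i\<in>{(n-m)+1..(n-m)+m}. d dvd i}" by simp
      then show ?thesis using count_mult[OF dpos, of "n-m" m] m by simp
    qed
    have c2: "card {i\<in>{1..m}. p ^ t dvd f i} = m div d"
    proof -
      have "{i\<in>{1..m}. p ^ t dvd f i} = {i\<in>{1..m}. d dvd i}" by (rule chr') simp
      then have "{i\<in>{1..m}. p ^ t dvd f i} = {i\<in>{0+1..0+m}. d dvd i}" by simp
      then show ?thesis using count_mult[OF dpos, of 0 m] by simp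
    qed
    have c3: "ind t m = (if d dvd m then 1 else 0)" unfolding ind_def using chr m by simp
    show ?thesis unfolding c1 c2 c3 g0 using div_arith[OF dpos, of m "n-m"] m by simp
  qed
  have "v m + (\<Sum>i\<in>I. v i) \<le> v i0 + (\<Sum>i=1..m. v i)"
  proof -
    have "v m + (\<Sum>i\<in>I. v i) = (\<Sum>t\<in>{1..B}. ind t m + card {i\<in>I. p ^ t dvd f i})"
      using vsum[of m] m ssum[OF Isub] by (simp add: sum.distrib)
    also have "\<dots> \<le> (\<Sum>t\<in>{1..B}. ind t i0 + card {i\<in>{1..m}. p ^ t dvd f i})"
      by (intro sum_mono pert)
    also have "\<dots> = v i0 + (\<Sum>i=1..m. v i)"
      using vsum[of i0] i0(1) Isub ssum[of "{1..m}"] m by (auto simp: sum.distrib)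
    finally show ?thesis .
  qed
  then have "multiplicity p A \<le> v i0" using meq by simp
  then show ?thesis using i0(1) unfolding I_def v_def by blast
qed



theorem theorem7:
  fixes P Q :: int and n k :: nat
  assumes "P \<noteq> 0" and "Q \<noteq> 0" and "coprime P Q"
    and "P^2 - 4*Q \<noteq> 0"
    and "\<not> root_of_unity (lucas_alpha P Q / lucas_beta P Q)"
    and "1 \<le> k" and "k \<le> n"
  shows "Lcm ((\<lambda>i. lucasU P Q i) ` {n-k+1..n})
       = Lcm ((\<lambda>m. lucasU P Q m * lucas_binom P Q n m) ` {1..k})"
proof -
  let ?U = "lucasU P Q" and ?F = "lucas_fact P Q"
  have nz: "?U i \<noteq> 0" if "i \<ge> 1" for i using U_nonzero[OF assms(2,4,5) that] .
  have Fnz: "?F j \<noteq> 0" for j unfolding lucas_fact_def using nz by (simp add: prod_zero_iff)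
  have Fsplit: "?F j = (\<Prod>i=1..j. ?U i)" for j unfolding lucas_fact_def ..
  have prodI: "(\<Prod>i=n-m+1..n. ?U i) = ?F m * lbc P Q m (n-m)" if "m \<le> n" for m
  proof -
    have "(\<Prod>i=n-m+1..n. ?U i) * ?F (n-m) = ?F n"
      using prod_split[of P Q "n-m" m] that by simp
    also have "\<dots> = ?F m * lbc P Q m (n-m) * ?F (n-m)"
      using lbc_prop[of P Q m "n-m"] that by (simp add: ac_simps)
    finally show ?thesis using Fnz[of "n-m"] by simp
  qed
  have binom: "lucas_binom P Q n m = lbc P Q m (n-m)" if "m \<le> n" for m
    unfolding lucas_binom_def prodI[OF that] using Fnz[of m] by simp
  define A where "A m = ?U m * lbc P Q m (n-m)" for m
  have Yeq: "(\<lambda>m. ?U m * lucas_binom P Q n m) ` {1..k} = A ` {1..k}"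
    unfolding A_def using binom assms(7) by (intro image_cong) auto
  have Anz: "A m \<noteq> 0" if "1 \<le> m" "m \<le> n" for m
  proof -
    have "(\<Prod>i=n-m+1..n. ?U i) \<noteq> 0" using nz by (auto simp: prod_zero_iff)
    then have "?F m * lbc P Q m (n-m) \<noteq> 0" unfolding prodI[OF that(2)] .
    then show ?thesis unfolding A_def using nz[OF that(1)] by simp
  qed
  have divA: "?U (n-m+1) dvd A m" if mm: "1 \<le> m" "m \<le> n" for m
  proof -
    obtain m' where m': "m = Suc m'" using Suc_le_D[of 0 m] mm(1) by auto
    have f: "?F m = ?F m' * ?U m" using lucas_fact_Suc[of P Q m'] m' by simp
    have s1: "m + (n-m) = n" using mm(2) by simp
    have l1: "?F m * ?F (n-m) * lbc P Q m (n-m) = ?F n" using lbc_prop[of P Q m "n-m"] unfolding s1 .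
    have e1: "A m * (?F m' * ?F (n-m)) = ?F n" unfolding A_def l1[symmetric] f by (simp add: algebra_simps)
    have f2: "?F (n-m+1) = ?F (n-m) * ?U (n-m+1)" using lucas_fact_Suc[of P Q "n-m"] by simp
    have s2: "m' + (n-m+1) = n" using m' mm(2) by simp
    have l2: "?F m' * ?F (n-m+1) * lbc P Q m' (n-m+1) = ?F n" using lbc_prop[of P Q m' "n-m+1"] unfolding s2 .
    have e2: "?U (n-m+1) * lbc P Q m' (n-m+1) * (?F m' * ?F (n-m)) = ?F n"
      unfolding l2[symmetric] f2 by (simp add: algebra_simps)
    have "A m = ?U (n-m+1) * lbc P Q m' (n-m+1)"
      using e1 e2 Fnz[of m'] Fnz[of "n-m"] by (metis mult_cancel_right mult_eq_0_iff)
    then show ?thesis by simp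
  qed
  define X where "X = ?U ` {n-k+1..n}"
  have Xf: "finite X" unfolding X_def by simp
  have X0: "0 \<notin> X" unfolding X_def using nz by auto
  have LXnz: "Lcm X \<noteq> 0" using Lcm_0_iff[OF Xf] X0 by simp
  have d1: "Lcm X dvd Lcm (A ` {1..k})"
  proof (rule Lcm_least)
    fix x assume "x \<in> X"
    then obtain i where i: "i \<in> {n-k+1..n}" "x = ?U i" unfolding X_def by auto
    define m where "m = n - i + 1"
    have m: "1 \<le> m" "m \<le> k" "i = n - m + 1" using i assms(6,7) unfolding m_def by auto
    have "x dvd A m" using divA[of m] m assms(7) i by simp
    also have "A m dvd Lcm (A ` {1..k})" using m by (intro dvd_Lcm) auto
    finally show "x dvd Lcm (A ` {1..k})" .
  qed
  have d2: "Lcm (A ` {1..k}) dvd Lcm X"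
  proof (rule Lcm_least)
    fix y assume "y \<in> A ` {1..k}"
    then obtain m where m: "m \<in> {1..k}" "y = A m" by auto
    have mn: "1 \<le> m" "m \<le> n" using m assms(7) by auto
    show "y dvd Lcm X" unfolding m(2)
    proof (rule multiplicity_le_imp_dvd)
      show "A m \<noteq> 0" using Anz[OF mn] .
      fix p :: int assume p: "prime p"
      have eq: "A m * (\<Prod>i=1..m. ?U i) = ?U m * (\<Prod>i=n-m+1..n. ?U i)"
        unfolding A_def prodI[OF mn(2)] Fsplit by (simp add: ac_simps)
      obtain i where i: "i \<in> {n-m+1..n}" "multiplicity p (A m) \<le> multiplicity p (?U i)"
        using layer[of ?U m n p "A m", OF nz dvd_gcd_idx[OF assms(3)] dvd_mult_idx mn p eq] by blast
      have "i \<in> {n-k+1..n}" using i(1) m(1) by auto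
      then have "?U i dvd Lcm X" unfolding X_def by (intro dvd_Lcm) auto
      then have "multiplicity p (?U i) \<le> multiplicity p (Lcm X)"
        using LXnz by (rule dvd_imp_multiplicity_le)
      then show "multiplicity p (A m) \<le> multiplicity p (Lcm X)" using i(2) by simp
    qed
  qed
  show ?thesis unfolding Yeq X_def[symmetric]
    using d1 d2 by (simp add: zdvd_antisym_nonneg)
qed


end
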